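(* (Intuitionistic modal logic.) For all propositions $A,B,C$: (MP) $\vdash^H_{\mathbf{CPL}} A\supset B$ and $\vdash^H_{\mathbf{CPL}} A$ imply $\vdash^H_{\mathbf{CPL}} B$; and $\vdash^H_{\mathbf{CPL*}} A\supset B$ and $\vdash^H_{\mathbf{CPL*}} A$ imply $\vdash^H_{\mathbf{CPL*}} B$. (I) $A\supset A$; (K) $A\supset B\supset A$; (S) $(A\supset B\supset C)\supset(A\supset B)\supset A\supset C$; ($\bot E$) $\bot\supset A$ — each of these holds under both $\vdash^H_{\mathbf{CPL}}$ and $\vdash^H_{\mathbf{CPL*}}$. (NEC) $\vdash^H_{\mathbf{CPL}} A$ implies $\vdash^H_{\mathbf{CPL}}\Box A$, and $\vdash^H_{\mathbf{CPL*}} A$ implies $\vdash^H_{\mathbf{CPL*}}\Box A$. ($K\Box$) $\Box(A\supset B)\supset\Box A\supset\Box B$ and ($K\Diamond$) $\Box(A\supset B)\supset\Diamond A\supset\Diamond B$ hold under both $\vdash^H_{\mathbf{CPL}}$ and $\vdash^H_{\mathbf{CPL*}}$. ($4\Box$) $\Box A\supset\Box\Box A$ holds under both $\vdash^H_{\mathbf{CPL}}$ and $\vdash^H_{\mathbf{CPL*}}$ when only transitive accessibility relations are considered. ($\Diamond\bot$) $\vdash^H_{\mathbf{CPL*}}\neg\Diamond\bot$. ($4\Diamond$) $\Diamond\Diamond A\supset\Diamond A$ holds under $\vdash^H_{\mathbf{CPL*}}$ when only transitive accessibility relations are considered. Moreover, $\neg\Diamond\bot$ is not an axiom of CPL, and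 $(\Diamond A\supset\Box B)\supset\Box(A\supset B)$ is an axiom of neither CPL nor CPL*.
   Context: A set $W$ of worlds with a binary accessibility relation $\prec$ is converse well-founded if there is no infinite chain $w_0\prec w_1\prec\cdots$; $\prec^*$ denotes its reflexive–transitive closure. Propositions: $A,B,C ::= Q\mid\bot\mid A\supset B\mid\Diamond A\mid\Box A$ ($Q$ atomic); $\neg A$ abbreviates $A\supset\bot$, and $\supset$ associates to the right. A context $\Gamma$ is a finite collection of judgments $A[w]$. Given such $(W,\prec)$, $\Gamma\vdash_{\mathbf{CPL}}A[w]$ is defined one world at a time (provability at $w$ after provability at all worlds reachable from $w$ by one or more $\prec$-steps) as the least relation closed under: (hyp) $\Gamma,A[w]\vdash A[w]$; ($\bot E$) $\Gamma\vdash\bot[w]$ implies $\Gamma\vdash C[w]$; ($\supset I$) $\Gamma,A[w]\vdash B[w]$ implies $\Gamma\vdash A\supset B[w]$; ($\supset E$) $\Gamma\vdash A\supset B[w]$ and $\Gamma\vdash A[w]$ imply $\Gamma\vdash B[w]$; ($\Diamond I$) $w\prec w'$ and $\Gamma\vdash A[w']$ imply $\Gamma\vdash\Diamond A[w]$; ($\Box I$) if $\Gamma\vdash A[w']$ for all $w'$ with $w\prec w'$ then $\Gamma\vdash\Box A[w]$; ($\Diamond E$) if $\Gamma\vdash\Diamond A[w]$ and for all $w'$ with $w\prec w'$, $\Gamma\vdash A[w']$ implies $\Gamma\vdash C[w]$, then $\Gamma\vdash C[w]$; ($\Box E$) if $\Gamma\vdash\Box A[w]$ and ($\Gamma\vdash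 A[w']$ for all $w'$ with $w\prec w'$) implies $\Gamma\vdash C[w]$, then $\Gamma\vdash C[w]$. $\Gamma\vdash_{\mathbf{CPL*}}A[w]$ is defined identically except that: ($\bot E$) $w'\prec^* w$ and $\Gamma\vdash\bot[w]$ imply $\Gamma\vdash C[w']$; ($\Diamond E$) if $w''\prec^* w$, $\Gamma\vdash\Diamond A[w]$, and for all $w'$ with $w\prec w'$, $\Gamma\vdash A[w']$ implies $\Gamma\vdash C[w'']$, then $\Gamma\vdash C[w'']$; ($\Box E$) if $w''\prec^* w$, $\Gamma\vdash\Box A[w]$, and ($\Gamma\vdash A[w']$ for all $w'$ with $w\prec w'$) implies $\Gamma\vdash C[w'']$, then $\Gamma\vdash C[w'']$. $\vdash^H_{\mathbf{CPL}}A$ means: for every converse well-founded $(W,\prec)$, every $w\in W$ and every context $\Gamma$, $\Gamma\vdash_{\mathbf{CPL}}A[w]$; likewise $\vdash^H_{\mathbf{CPL*}}A$ with $\vdash_{\mathbf{CPL*}}$. "Holds when only transitive accessibility relations are considered" means the same quantification restricted to transitive $\prec$. A schema is "not an axiom" of CPL (resp. CPL* ) if there exist a converse well-founded $(W,\prec)$, a world $w$, a context $\Gamma$, and an instance $A$ of the schema with $\Gamma\nvdash_{\mathbf{CPL}}A[w]$ (resp. $\Gamma\nvdash_{\mathbf{CPL*}}A[w]$). *)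

theory Defs
  imports Main
begin

datatype 'q fm = Atom 'q | Bot | Imp "'q fm" "'q fm" | Dia "'q fm" | Box "'q fm"

definition Neg :: "'q fm \<Rightarrow> 'q fm" where
  "Neg A = Imp A Bot"

text \<open>A context is a finite collection of judgments A[w]; finiteness is imposed
  where contexts are quantified.\<close>
type_synonym ('q, 'w) ctx = "('q fm \<times> 'w) set"

definition cwf :: "('w \<Rightarrow> 'w \<Rightarrow> bool) \<Rightarrow> bool" where
  "cwf R \<longleftrightarrow> \<not> (\<exists>f :: nat \<Rightarrow> 'w. \<forall>n. R (f n) (f (Suc n)))"

text \<open>cpl_at R S w is the least relation (over all contexts and propositions) at world w
  closed under the CPL rules, where S gives provability at the other (strictly
  reachable) worlds, assumed already defined.\<close>
inductive cpl_at :: "('w \<Rightarrow> 'w \<Rightarrow> bool) \<Rightarrow> ('w \<Rightarrow> ('q, 'w) ctx \<Rightarrow> 'q fm \<Rightarrow> bool)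
                      \<Rightarrow> 'w \<Rightarrow> ('q, 'w) ctx \<Rightarrow> 'q fm \<Rightarrow> bool"
  for R S w where
  hyp: "(A, w) \<in> \<Gamma> \<Longrightarrow> cpl_at R S w \<Gamma> A"
| botE: "cpl_at R S w \<Gamma> Bot \<Longrightarrow> cpl_at R S w \<Gamma> C"
| impI: "cpl_at R S w (insert (A, w) \<Gamma>) B \<Longrightarrow> cpl_at R S w \<Gamma> (Imp A B)"
| impE: "cpl_at R S w \<Gamma> (Imp A B) \<Longrightarrow> cpl_at R S w \<Gamma> A \<Longrightarrow> cpl_at R S w \<Gamma> B"
| diaI: "R w w' \<Longrightarrow> S w' \<Gamma> A \<Longrightarrow> cpl_at R S w \<Gamma> (Dia A)"
| boxI: "(\<forall>w'. R w w' \<longrightarrow> S w' \<Gamma> A) \<Longrightarrow> cpl_at R S w \<Gamma> (Box A)"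
| diaE: "cpl_at R S w \<Gamma> (Dia A) \<Longrightarrow>
         (\<forall>w'. R w w' \<longrightarrow> S w' \<Gamma> A \<longrightarrow> cpl_at R S w \<Gamma> C) \<Longrightarrow> cpl_at R S w \<Gamma> C"
| boxE: "cpl_at R S w \<Gamma> (Box A) \<Longrightarrow>
         ((\<forall>w'. R w w' \<longrightarrow> S w' \<Gamma> A) \<longrightarrow> cpl_at R S w \<Gamma> C) \<Longrightarrow> cpl_at R S w \<Gamma> C"

text \<open>CPL*: the elimination rules may use a judgment at any world v with w R* v.
  If v = w this is the relation being defined at level w; otherwise v is strictly
  reachable from w and provability there is given by S.\<close>
inductive cpls_at :: "('w \<Rightarrow> 'w \<Rightarrow> bool) \<Rightarrow> ('w \<Rightarrow> ('q, 'w) ctx \<Rightarrow> 'q fm \<Rightarrow> bool)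
                      \<Rightarrow> 'w \<Rightarrow> ('q, 'w) ctx \<Rightarrow> 'q fm \<Rightarrow> bool"
  for R S w where
  hyp: "(A, w) \<in> \<Gamma> \<Longrightarrow> cpls_at R S w \<Gamma> A"
| botE: "R\<^sup>*\<^sup>* w v \<Longrightarrow>
         (v = w \<longrightarrow> cpls_at R S w \<Gamma> Bot) \<Longrightarrow> (v \<noteq> w \<longrightarrow> S v \<Gamma> Bot) \<Longrightarrow>
         cpls_at R S w \<Gamma> C"
| impI: "cpls_at R S w (insert (A, w) \<Gamma>) B \<Longrightarrow> cpls_at R S w \<Gamma> (Imp A B)"
| impE: "cpls_at R S w \<Gamma> (Imp A B) \<Longrightarrow> cpls_at R S w \<Gamma> A \<Longrightarrow> cpls_at R S w \<Gamma> B"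
| diaI: "R w w' \<Longrightarrow> S w' \<Gamma> A \<Longrightarrow> cpls_at R S w \<Gamma> (Dia A)"
| boxI: "(\<forall>w'. R w w' \<longrightarrow> S w' \<Gamma> A) \<Longrightarrow> cpls_at R S w \<Gamma> (Box A)"
| diaE: "R\<^sup>*\<^sup>* w v \<Longrightarrow>
         (v = w \<longrightarrow> cpls_at R S w \<Gamma> (Dia A)) \<Longrightarrow> (v \<noteq> w \<longrightarrow> S v \<Gamma> (Dia A)) \<Longrightarrow>
         (\<forall>w'. R v w' \<longrightarrow> S w' \<Gamma> A \<longrightarrow> cpls_at R S w \<Gamma> C) \<Longrightarrow> cpls_at R S w \<Gamma> C"
| boxE: "R\<^sup>*\<^sup>* w v \<Longrightarrow>
         (v = w \<longrightarrow> cpls_at R S w \<Gamma> (Box A)) \<Longrightarrow> (v \<noteq> w \<longrightarrow> S v \<Gamma> (Box A)) \<Longrightarrow>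
         ((\<forall>w'. R v w' \<longrightarrow> S w' \<Gamma> A) \<longrightarrow> cpls_at R S w \<Gamma> C) \<Longrightarrow> cpls_at R S w \<Gamma> C"

text \<open>For converse well-founded R there is exactly one family P with P w = cpl_at R P w
  for all w (recursion along R; level w only consults P at strictly reachable worlds).\<close>
definition CPL :: "('w \<Rightarrow> 'w \<Rightarrow> bool) \<Rightarrow> ('q, 'w) ctx \<Rightarrow> 'q fm \<Rightarrow> 'w \<Rightarrow> bool" where
  "CPL R \<Gamma> A w = (THE P. \<forall>v. P v = cpl_at R P v) w \<Gamma> A"

definition CPLs :: "('w \<Rightarrow> 'w \<Rightarrow> bool) \<Rightarrow> ('q, 'w) ctx \<Rightarrow> 'q fm \<Rightarrow> 'w \<Rightarrow> bool" where
  "CPLs R \<Gamma> A w = (THE P. \<forall>v. P v = cpls_at R P v) w \<Gamma> A"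

text \<open>Validity over all converse well-founded frames satisfying a frame condition K
  (K = (\<lambda>_. True) gives the Hilbert-style judgments; K = transp the transitive variant).\<close>
definition valid_CPL :: "(('w \<Rightarrow> 'w \<Rightarrow> bool) \<Rightarrow> bool) \<Rightarrow> 'q fm \<Rightarrow> bool" where
  "valid_CPL K A \<longleftrightarrow> (\<forall>R w \<Gamma>. cwf R \<and> K R \<and> finite \<Gamma> \<longrightarrow> CPL R \<Gamma> A w)"

definition valid_CPLs :: "(('w \<Rightarrow> 'w \<Rightarrow> bool) \<Rightarrow> bool) \<Rightarrow> 'q fm \<Rightarrow> bool" where
  "valid_CPLs K A \<longleftrightarrow> (\<forall>R w \<Gamma>. cwf R \<and> K R \<and> finite \<Gamma> \<longrightarrow> CPLs R \<Gamma> A w)"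

definition all_frames :: "('w \<Rightarrow> 'w \<Rightarrow> bool) \<Rightarrow> bool" where
  "all_frames R \<longleftrightarrow> True"

end

theory Submission
  imports Defs
begin


definition rr :: "('w \<Rightarrow> 'w \<Rightarrow> bool) \<Rightarrow> ('w \<times> 'w) set" where
  "rr R = {(y,x). R x y}\<^sup>+"

lemma wf_rr: "cwf R \<Longrightarrow> wf (rr R)"
  unfolding rr_def cwf_def
  by (rule wf_trancl) (auto simp: wf_iff_no_infinite_down_chain)

lemma rr_step: "R w w' \<Longrightarrow> (w', w) \<in> rr R"
  unfolding rr_def by auto

lemma rr_tr: "R\<^sup>+\<^sup>+ w v \<Longrightarrow> (v, w) \<in> rr R"
proof (induction rule: tranclp_induct)
  case (base y) then show ?case by (rule rr_step)
next
  case (step y z) then show ?case unfolding rr_def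
    by (meson case_prodI mem_Collect_eq trancl_into_trancl2)
qed

lemma rr_rt: "R\<^sup>*\<^sup>* w v \<Longrightarrow> v \<noteq> w \<Longrightarrow> (v, w) \<in> rr R"
  using rtranclpD rr_tr by metis

lemma cpl_at_cong:
  assumes ag: "\<forall>v. (v,w) \<in> rr R \<longrightarrow> S v = S' v"
  shows "cpl_at R S w \<Gamma> A \<Longrightarrow> cpl_at R S' w \<Gamma> A"
proof (induction rule: cpl_at.induct)
  have agr: "R w w' \<Longrightarrow> S w' G X = S' w' G X" for w' G X using ag rr_step by metis
  {
  case (hyp A \<Gamma>) then show ?case by (rule cpl_at.hyp)
next
  case (botE \<Gamma> C) show ?case using botE(2) by (rule cpl_at.botE)
next
  case (impI A \<Gamma> B) show ?case using impI(2) by (rule cpl_at.impI)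
next
  case (impE \<Gamma> A B) show ?case using impE(3,4) by (rule cpl_at.impE)
next
  case (diaI w' \<Gamma> A)
  have "S' w' \<Gamma> A" using diaI agr by blast
  then show ?case using diaI(1) by (rule cpl_at.diaI[rotated])
next
  case (boxI \<Gamma> A)
  have "\<forall>w'. R w w' \<longrightarrow> S' w' \<Gamma> A" using boxI agr by blast
  then show ?case by (rule cpl_at.boxI)
next
  case (diaE \<Gamma> A C)
  have "\<forall>w'. R w w' \<longrightarrow> S' w' \<Gamma> A \<longrightarrow> cpl_at R S' w \<Gamma> C"
    using diaE agr by blast
  then show ?case using diaE by (metis cpl_at.diaE)
next
  case (boxE \<Gamma> A C)
  have "(\<forall>w'. R w w' \<longrightarrow> S' w' \<Gamma> A) \<longrightarrow> cpl_at R S' w \<Gamma> C"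
    using boxE agr by blast
  then show ?case using boxE by (metis cpl_at.boxE)
  }
qed

lemma cpls_at_cong:
  assumes ag: "\<forall>v. (v,w) \<in> rr R \<longrightarrow> S v = S' v"
  shows "cpls_at R S w \<Gamma> A \<Longrightarrow> cpls_at R S' w \<Gamma> A"
proof (induction rule: cpls_at.induct)
  have agr: "R\<^sup>*\<^sup>* w v \<Longrightarrow> v \<noteq> w \<Longrightarrow> S v G X = S' v G X" for v G X using ag rr_rt by metis
  have agr2: "R\<^sup>*\<^sup>* w v \<Longrightarrow> R v w' \<Longrightarrow> S w' G X = S' w' G X" for v w' G X
    using ag rr_tr by (metis rtranclp_into_tranclp1)
  {
  case (hyp A \<Gamma>) then show ?case by (rule cpls_at.hyp)
next
  case (botE v \<Gamma> C)
  have a: "v = w \<longrightarrow> cpls_at R S' w \<Gamma> Bot" using botE by blast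
  have b: "v \<noteq> w \<longrightarrow> S' v \<Gamma> Bot" using botE agr by blast
  show ?case using botE(1) a b by (rule cpls_at.botE)
next
  case (impI A \<Gamma> B) show ?case using impI(2) by (rule cpls_at.impI)
next
  case (impE \<Gamma> A B) show ?case using impE(3,4) by (rule cpls_at.impE)
next
  case (diaI w' \<Gamma> A)
  have "S' w' \<Gamma> A" using diaI ag rr_step by metis
  then show ?case using diaI(1) by (rule cpls_at.diaI[rotated])
next
  case (boxI \<Gamma> A)
  have "\<forall>w'. R w w' \<longrightarrow> S' w' \<Gamma> A" using boxI ag rr_step by metis
  then show ?case by (rule cpls_at.boxI)
next
  case (diaE v \<Gamma> A C)
  have a: "v = w \<longrightarrow> cpls_at R S' w \<Gamma> (Dia A)" using diaE by blast
  have b: "v \<noteq> w \<longrightarrow> S' v \<Gamma> (Dia A)" using diaE agr by blast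
  have c: "\<forall>w'. R v w' \<longrightarrow> S' w' \<Gamma> A \<longrightarrow> cpls_at R S' w \<Gamma> C"
    using diaE agr2 by blast
  show ?case using diaE(1) a b c by (rule cpls_at.diaE)
next
  case (boxE v \<Gamma> A C)
  have a: "v = w \<longrightarrow> cpls_at R S' w \<Gamma> (Box A)" using boxE by blast
  have b: "v \<noteq> w \<longrightarrow> S' v \<Gamma> (Box A)" using boxE agr by blast
  have c: "(\<forall>w'. R v w' \<longrightarrow> S' w' \<Gamma> A) \<longrightarrow> cpls_at R S' w \<Gamma> C"
    using boxE agr2 by blast
  show ?case using boxE(1) a b c by (rule cpls_at.boxE)
  }
qed

lemma cpl_eq: fixes R :: "'w \<Rightarrow> 'w \<Rightarrow> bool" and f g :: "'w \<Rightarrow> ('q, 'w) ctx \<Rightarrow> 'q fm \<Rightarrow> bool"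
  shows "(\<forall>z. (z, x) \<in> rr R \<longrightarrow> f z = g z) \<Longrightarrow> cpl_at R f x = cpl_at R g x"
proof -
  assume h: "\<forall>z. (z, x) \<in> rr R \<longrightarrow> f z = g z"
  have h2: "\<forall>z. (z, x) \<in> rr R \<longrightarrow> g z = f z"
    proof (intro allI HOL.impI) fix z :: 'w assume "(z, x) \<in> rr R" then show "g z = f z" using h by simp qed
  show ?thesis
    by (intro ext iffI) (erule cpl_at_cong[OF h, rotated], erule cpl_at_cong[OF h2, rotated])
qed

lemma adm_cpl: "adm_wf (rr R) (cpl_at R)"
  unfolding adm_wf_def by (intro allI HOL.impI, erule cpl_eq)

lemma cpls_eq: fixes R :: "'w \<Rightarrow> 'w \<Rightarrow> bool" and f g :: "'w \<Rightarrow> ('q, 'w) ctx \<Rightarrow> 'q fm \<Rightarrow> bool"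
  shows "(\<forall>z. (z, x) \<in> rr R \<longrightarrow> f z = g z) \<Longrightarrow> cpls_at R f x = cpls_at R g x"
proof -
  assume h: "\<forall>z. (z, x) \<in> rr R \<longrightarrow> f z = g z"
  have h2: "\<forall>z. (z, x) \<in> rr R \<longrightarrow> g z = f z"
    proof (intro allI HOL.impI) fix z :: 'w assume "(z, x) \<in> rr R" then show "g z = f z" using h by simp qed
  show ?thesis
    by (intro ext iffI) (erule cpls_at_cong[OF h, rotated], erule cpls_at_cong[OF h2, rotated])
qed

lemma adm_cpls: "adm_wf (rr R) (cpls_at R)"
  unfolding adm_wf_def by (intro allI HOL.impI, erule cpls_eq)

lemma uniq_fix:
  assumes wf: "wf r" and adm: "adm_wf r F"
  shows "(THE P. \<forall>v. P v = F P v) = wfrec r F" and "\<forall>v. wfrec r F v = F (wfrec r F) v"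
proof -
  have fx: "\<forall>v. wfrec r F v = F (wfrec r F) v" using wfrec_fixpoint[OF wf adm] by metis
  have un: "Q = wfrec r F" if hQ: "\<forall>v. Q v = F Q v" for Q
  proof
    fix x show "Q x = wfrec r F x"
    proof (induction x rule: wf_induct[OF wf])
      case (1 x)
      have "Q x = F Q x" using hQ by blast
      also have "\<dots> = F (wfrec r F) x" using adm 1 unfolding adm_wf_def by blast
      also have "\<dots> = wfrec r F x" using fx by metis
      finally show ?case .
    qed
  qed
  show "(THE P. \<forall>v. P v = F P v) = wfrec r F"
    by (rule the_equality) (rule fx, erule un)
  show "\<forall>v. wfrec r F v = F (wfrec r F) v" by (rule fx)
qed

lemma CPL_unfold: "cwf R \<Longrightarrow> CPL R \<Gamma> A w = cpl_at R (\<lambda>v \<Gamma> A. CPL R \<Gamma> A v) w \<Gamma> A"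
proof -
  assume c: "cwf R"
  note u = uniq_fix[OF wf_rr[OF c] adm_cpl]
  have e: "(\<lambda>v \<Gamma> A. CPL R \<Gamma> A v) = wfrec (rr R) (cpl_at R)"
    unfolding CPL_def u(1) by (rule refl)
  have "CPL R \<Gamma> A w = wfrec (rr R) (cpl_at R) w \<Gamma> A" unfolding CPL_def u(1) by (rule refl)
  also have "\<dots> = cpl_at R (wfrec (rr R) (cpl_at R)) w \<Gamma> A"
    by (rule fun_cong[OF fun_cong[OF spec[OF u(2)]]])
  also have "\<dots> = cpl_at R (\<lambda>v \<Gamma> A. CPL R \<Gamma> A v) w \<Gamma> A"
    by (simp only: e[symmetric])
  finally show ?thesis .
qed

lemma CPLs_unfold: "cwf R \<Longrightarrow> CPLs R \<Gamma> A w = cpls_at R (\<lambda>v \<Gamma> A. CPLs R \<Gamma> A v) w \<Gamma> A"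
proof -
  assume c: "cwf R"
  note u = uniq_fix[OF wf_rr[OF c] adm_cpls]
  have e: "(\<lambda>v \<Gamma> A. CPLs R \<Gamma> A v) = wfrec (rr R) (cpls_at R)"
    unfolding CPLs_def u(1) by (rule refl)
  have "CPLs R \<Gamma> A w = wfrec (rr R) (cpls_at R) w \<Gamma> A" unfolding CPLs_def u(1) by (rule refl)
  also have "\<dots> = cpls_at R (wfrec (rr R) (cpls_at R)) w \<Gamma> A"
    by (rule fun_cong[OF fun_cong[OF spec[OF u(2)]]])
  also have "\<dots> = cpls_at R (\<lambda>v \<Gamma> A. CPLs R \<Gamma> A v) w \<Gamma> A"
    by (simp only: e[symmetric])
  finally show ?thesis .
qed



definition cP :: "('w \<Rightarrow> 'w \<Rightarrow> bool) \<Rightarrow> 'w \<Rightarrow> ('q, 'w) ctx \<Rightarrow> 'q fm \<Rightarrow> bool" where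
  "cP R = (\<lambda>v \<Gamma> A. CPL R \<Gamma> A v)"
definition cPs :: "('w \<Rightarrow> 'w \<Rightarrow> bool) \<Rightarrow> 'w \<Rightarrow> ('q, 'w) ctx \<Rightarrow> 'q fm \<Rightarrow> bool" where
  "cPs R = (\<lambda>v \<Gamma> A. CPLs R \<Gamma> A v)"

lemma cP_fix: "cwf R \<Longrightarrow> cP R w \<Gamma> A = cpl_at R (cP R) w \<Gamma> A"
  unfolding cP_def using CPL_unfold by metis
lemma cPs_fix: "cwf R \<Longrightarrow> cPs R w \<Gamma> A = cpls_at R (cPs R) w \<Gamma> A"
  unfolding cPs_def using CPLs_unfold by metis

lemma vCPL: fixes K :: "('w \<Rightarrow> 'w \<Rightarrow> bool) \<Rightarrow> bool" and A :: "'q fm" shows "(\<And>R w \<Gamma>. cwf R \<Longrightarrow> K R \<Longrightarrow> finite (\<Gamma> :: ('q, 'w) ctx) \<Longrightarrow> cpl_at R (cP R) w \<Gamma> A) \<Longrightarrow> valid_CPL K A"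
  unfolding valid_CPL_def using cP_fix unfolding cP_def by metis
lemma vCPLs: fixes K :: "('w \<Rightarrow> 'w \<Rightarrow> bool) \<Rightarrow> bool" and A :: "'q fm" shows "(\<And>R w \<Gamma>. cwf R \<Longrightarrow> K R \<Longrightarrow> finite (\<Gamma> :: ('q, 'w) ctx) \<Longrightarrow> cpls_at R (cPs R) w \<Gamma> A) \<Longrightarrow> valid_CPLs K A"
  unfolding valid_CPLs_def using cPs_fix unfolding cPs_def by metis

lemma cwf_irr: "cwf R \<Longrightarrow> \<not> R w w"
  unfolding cwf_def by (rule notI, erule notE, rule exI[of _ "\<lambda>_. w"], simp)

lemma rt1: "R w w' \<Longrightarrow> R\<^sup>*\<^sup>* w w'" by auto

lemma I1: "cpl_at R S w \<Gamma> (Imp A A)" by (rule cpl_at.impI, rule cpl_at.hyp, simp)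
lemma I2: "cpls_at R S w \<Gamma> (Imp A A)" by (rule cpls_at.impI, rule cpls_at.hyp, simp)
lemma K1: "cpl_at R S w \<Gamma> (Imp A (Imp B A))"
  by (rule cpl_at.impI, rule cpl_at.impI, rule cpl_at.hyp, simp)
lemma K2: "cpls_at R S w \<Gamma> (Imp A (Imp B A))"
  by (rule cpls_at.impI, rule cpls_at.impI, rule cpls_at.hyp, simp)
lemma S1: "cpl_at R S w \<Gamma> (Imp (Imp A (Imp B C)) (Imp (Imp A B) (Imp A C)))"
  apply (rule cpl_at.impI, rule cpl_at.impI, rule cpl_at.impI)
  apply (rule cpl_at.impE[where A=B])
   apply (rule cpl_at.impE[where A=A])
    apply (rule cpl_at.hyp, simp)
   apply (rule cpl_at.hyp, simp)
  apply (rule cpl_at.impE[where A=A])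
   apply (rule cpl_at.hyp, simp)
  apply (rule cpl_at.hyp, simp)
  done
lemma S2: "cpls_at R S w \<Gamma> (Imp (Imp A (Imp B C)) (Imp (Imp A B) (Imp A C)))"
  apply (rule cpls_at.impI, rule cpls_at.impI, rule cpls_at.impI)
  apply (rule cpls_at.impE[where A=B])
   apply (rule cpls_at.impE[where A=A])
    apply (rule cpls_at.hyp, simp)
   apply (rule cpls_at.hyp, simp)
  apply (rule cpls_at.impE[where A=A])
   apply (rule cpls_at.hyp, simp)
  apply (rule cpls_at.hyp, simp)
  done
lemma B1: "cpl_at R S w \<Gamma> (Imp Bot A)"
  by (rule cpl_at.impI, rule cpl_at.botE, rule cpl_at.hyp, simp)
lemma B2: "cpls_at R S w \<Gamma> (Imp Bot A)"
  by (rule cpls_at.impI, rule cpls_at.botE[where v=w], simp, rule HOL.impI, rule cpls_at.hyp, simp, simp)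

lemma Kbox1:
  assumes c: "cwf R"
  shows "cpl_at R (cP R) w \<Gamma> (Imp (Box (Imp A B)) (Imp (Box A) (Box B)))"
proof (rule cpl_at.impI, rule cpl_at.impI)
  let ?G = "insert (Box A, w) (insert (Box (Imp A B), w) \<Gamma>)"
  show "cpl_at R (cP R) w ?G (Box B)"
  proof (rule cpl_at.boxE[where A="Imp A B"])
    show "cpl_at R (cP R) w ?G (Box (Imp A B))" by (rule cpl_at.hyp, simp)
    show "(\<forall>w'. R w w' \<longrightarrow> cP R w' ?G (Imp A B)) \<longrightarrow> cpl_at R (cP R) w ?G (Box B)"
    proof
      assume h1: "\<forall>w'. R w w' \<longrightarrow> cP R w' ?G (Imp A B)"
      show "cpl_at R (cP R) w ?G (Box B)"
      proof (rule cpl_at.boxE[where A="A"])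
        show "cpl_at R (cP R) w ?G (Box A)" by (rule cpl_at.hyp, simp)
        show "(\<forall>w'. R w w' \<longrightarrow> cP R w' ?G A) \<longrightarrow> cpl_at R (cP R) w ?G (Box B)"
        proof
          assume h2: "\<forall>w'. R w w' \<longrightarrow> cP R w' ?G A"
          show "cpl_at R (cP R) w ?G (Box B)"
          proof (rule cpl_at.boxI, intro allI HOL.impI)
            fix w' assume r: "R w w'"
            show "cP R w' ?G B"
              using h1 h2 r cP_fix[OF c] cpl_at.impE by metis
          qed
        qed
      qed
    qed
  qed
qed

lemma Kbox2:
  assumes c: "cwf R"
  shows "cpls_at R (cPs R) w \<Gamma> (Imp (Box (Imp A B)) (Imp (Box A) (Box B)))"
proof (rule cpls_at.impI, rule cpls_at.impI)
  let ?G = "insert (Box A, w) (insert (Box (Imp A B), w) \<Gamma>)"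
  show "cpls_at R (cPs R) w ?G (Box B)"
  proof (rule cpls_at.boxE[where A="Imp A B" and v=w], simp)
    show "w = w \<longrightarrow> cpls_at R (cPs R) w ?G (Box (Imp A B))" by (simp add: cpls_at.hyp)
    show "w \<noteq> w \<longrightarrow> cPs R w ?G (Box (Imp A B))" by simp
    show "(\<forall>w'. R w w' \<longrightarrow> cPs R w' ?G (Imp A B)) \<longrightarrow> cpls_at R (cPs R) w ?G (Box B)"
    proof
      assume h1: "\<forall>w'. R w w' \<longrightarrow> cPs R w' ?G (Imp A B)"
      show "cpls_at R (cPs R) w ?G (Box B)"
      proof (rule cpls_at.boxE[where A="A" and v=w], simp)
        show "w = w \<longrightarrow> cpls_at R (cPs R) w ?G (Box A)" by (simp add: cpls_at.hyp)
        show "w \<noteq> w \<longrightarrow> cPs R w ?G (Box A)" by simp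
        show "(\<forall>w'. R w w' \<longrightarrow> cPs R w' ?G A) \<longrightarrow> cpls_at R (cPs R) w ?G (Box B)"
        proof
          assume h2: "\<forall>w'. R w w' \<longrightarrow> cPs R w' ?G A"
          show "cpls_at R (cPs R) w ?G (Box B)"
          proof (rule cpls_at.boxI, intro allI HOL.impI)
            fix w' assume r: "R w w'"
            show "cPs R w' ?G B"
              using h1 h2 r cPs_fix[OF c] cpls_at.impE by metis
          qed
        qed
      qed
    qed
  qed
qed

lemma Kdia1:
  assumes c: "cwf R"
  shows "cpl_at R (cP R) w \<Gamma> (Imp (Box (Imp A B)) (Imp (Dia A) (Dia B)))"
proof (rule cpl_at.impI, rule cpl_at.impI)
  let ?G = "insert (Dia A, w) (insert (Box (Imp A B), w) \<Gamma>)"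
  show "cpl_at R (cP R) w ?G (Dia B)"
  proof (rule cpl_at.boxE[where A="Imp A B"])
    show "cpl_at R (cP R) w ?G (Box (Imp A B))" by (rule cpl_at.hyp, simp)
    show "(\<forall>w'. R w w' \<longrightarrow> cP R w' ?G (Imp A B)) \<longrightarrow> cpl_at R (cP R) w ?G (Dia B)"
    proof
      assume h1: "\<forall>w'. R w w' \<longrightarrow> cP R w' ?G (Imp A B)"
      show "cpl_at R (cP R) w ?G (Dia B)"
      proof (rule cpl_at.diaE[where A="A"])
        show "cpl_at R (cP R) w ?G (Dia A)" by (rule cpl_at.hyp, simp)
        show "\<forall>w'. R w w' \<longrightarrow> cP R w' ?G A \<longrightarrow> cpl_at R (cP R) w ?G (Dia B)"
        proof (intro allI HOL.impI)
          fix w' assume r: "R w w'" and h2: "cP R w' ?G A"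
          have "cP R w' ?G B"
            using h1 h2 r cP_fix[OF c] cpl_at.impE by metis
          then show "cpl_at R (cP R) w ?G (Dia B)" using r by (rule cpl_at.diaI[rotated])
        qed
      qed
    qed
  qed
qed

lemma Kdia2:
  assumes c: "cwf R"
  shows "cpls_at R (cPs R) w \<Gamma> (Imp (Box (Imp A B)) (Imp (Dia A) (Dia B)))"
proof (rule cpls_at.impI, rule cpls_at.impI)
  let ?G = "insert (Dia A, w) (insert (Box (Imp A B), w) \<Gamma>)"
  show "cpls_at R (cPs R) w ?G (Dia B)"
  proof (rule cpls_at.boxE[where A="Imp A B" and v=w], simp)
    show "w = w \<longrightarrow> cpls_at R (cPs R) w ?G (Box (Imp A B))" by (simp add: cpls_at.hyp)
    show "w \<noteq> w \<longrightarrow> cPs R w ?G (Box (Imp A B))" by simp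
    show "(\<forall>w'. R w w' \<longrightarrow> cPs R w' ?G (Imp A B)) \<longrightarrow> cpls_at R (cPs R) w ?G (Dia B)"
    proof
      assume h1: "\<forall>w'. R w w' \<longrightarrow> cPs R w' ?G (Imp A B)"
      show "cpls_at R (cPs R) w ?G (Dia B)"
      proof (rule cpls_at.diaE[where A="A" and v=w], simp)
        show "w = w \<longrightarrow> cpls_at R (cPs R) w ?G (Dia A)" by (simp add: cpls_at.hyp)
        show "w \<noteq> w \<longrightarrow> cPs R w ?G (Dia A)" by simp
        show "\<forall>w'. R w w' \<longrightarrow> cPs R w' ?G A \<longrightarrow> cpls_at R (cPs R) w ?G (Dia B)"
        proof (intro allI HOL.impI)
          fix w' assume r: "R w w'" and h2: "cPs R w' ?G A"
          have "cPs R w' ?G B"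
            using h1 h2 r cPs_fix[OF c] cpls_at.impE by metis
          then show "cpls_at R (cPs R) w ?G (Dia B)" using r by (rule cpls_at.diaI[rotated])
        qed
      qed
    qed
  qed
qed

lemma Four1:
  assumes c: "cwf R" and t: "transp R"
  shows "cpl_at R (cP R) w \<Gamma> (Imp (Box A) (Box (Box A)))"
proof (rule cpl_at.impI)
  let ?G = "insert (Box A, w) \<Gamma>"
  show "cpl_at R (cP R) w ?G (Box (Box A))"
  proof (rule cpl_at.boxE[where A="A"])
    show "cpl_at R (cP R) w ?G (Box A)" by (rule cpl_at.hyp, simp)
    show "(\<forall>w'. R w w' \<longrightarrow> cP R w' ?G A) \<longrightarrow> cpl_at R (cP R) w ?G (Box (Box A))"
    proof
      assume h: "\<forall>w'. R w w' \<longrightarrow> cP R w' ?G A"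
      show "cpl_at R (cP R) w ?G (Box (Box A))"
      proof (rule cpl_at.boxI, intro allI HOL.impI)
        fix w' assume r: "R w w'"
        have "cpl_at R (cP R) w' ?G (Box A)"
          by (rule cpl_at.boxI) (use h r t in \<open>metis transpD\<close>)
        then show "cP R w' ?G (Box A)" using cP_fix[OF c] by metis
      qed
    qed
  qed
qed

lemma Four2:
  assumes c: "cwf R" and t: "transp R"
  shows "cpls_at R (cPs R) w \<Gamma> (Imp (Box A) (Box (Box A)))"
proof (rule cpls_at.impI)
  let ?G = "insert (Box A, w) \<Gamma>"
  show "cpls_at R (cPs R) w ?G (Box (Box A))"
  proof (rule cpls_at.boxE[where A="A" and v=w], simp)
    show "w = w \<longrightarrow> cpls_at R (cPs R) w ?G (Box A)" by (simp add: cpls_at.hyp)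
    show "w \<noteq> w \<longrightarrow> cPs R w ?G (Box A)" by simp
    show "(\<forall>w'. R w w' \<longrightarrow> cPs R w' ?G A) \<longrightarrow> cpls_at R (cPs R) w ?G (Box (Box A))"
    proof
      assume h: "\<forall>w'. R w w' \<longrightarrow> cPs R w' ?G A"
      show "cpls_at R (cPs R) w ?G (Box (Box A))"
      proof (rule cpls_at.boxI, intro allI HOL.impI)
        fix w' assume r: "R w w'"
        have "cpls_at R (cPs R) w' ?G (Box A)"
          by (rule cpls_at.boxI) (use h r t in \<open>metis transpD\<close>)
        then show "cPs R w' ?G (Box A)" using cPs_fix[OF c] by metis
      qed
    qed
  qed
qed

lemma DiaBot:
  assumes c: "cwf R"
  shows "cpls_at R (cPs R) w \<Gamma> (Neg (Dia Bot))"
  unfolding Neg_def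
proof (rule cpls_at.impI)
  let ?G = "insert (Dia Bot, w) \<Gamma>"
  show "cpls_at R (cPs R) w ?G Bot"
  proof (rule cpls_at.diaE[where A="Bot" and v=w], simp)
    show "w = w \<longrightarrow> cpls_at R (cPs R) w ?G (Dia Bot)" by (simp add: cpls_at.hyp)
    show "w \<noteq> w \<longrightarrow> cPs R w ?G (Dia Bot)" by simp
    show "\<forall>w'. R w w' \<longrightarrow> cPs R w' ?G Bot \<longrightarrow> cpls_at R (cPs R) w ?G Bot"
    proof (intro allI HOL.impI)
      fix w' assume r: "R w w'" and h: "cPs R w' ?G Bot"
      have ne: "w' \<noteq> w" using r cwf_irr[OF c] by metis
      show "cpls_at R (cPs R) w ?G Bot"
        by (rule cpls_at.botE[where v=w']) (use r ne h in auto)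
    qed
  qed
qed

lemma FourDia:
  assumes c: "cwf R" and t: "transp R"
  shows "cpls_at R (cPs R) w \<Gamma> (Imp (Dia (Dia A)) (Dia A))"
proof (rule cpls_at.impI)
  let ?G = "insert (Dia (Dia A), w) \<Gamma>"
  show "cpls_at R (cPs R) w ?G (Dia A)"
  proof (rule cpls_at.diaE[where A="Dia A" and v=w], simp)
    show "w = w \<longrightarrow> cpls_at R (cPs R) w ?G (Dia (Dia A))" by (simp add: cpls_at.hyp)
    show "w \<noteq> w \<longrightarrow> cPs R w ?G (Dia (Dia A))" by simp
    show "\<forall>w'. R w w' \<longrightarrow> cPs R w' ?G (Dia A) \<longrightarrow> cpls_at R (cPs R) w ?G (Dia A)"
    proof (intro allI HOL.impI)
      fix w' assume r: "R w w'" and h: "cPs R w' ?G (Dia A)"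
      have ne: "w' \<noteq> w" using r cwf_irr[OF c] by metis
      show "cpls_at R (cPs R) w ?G (Dia A)"
      proof (rule cpls_at.diaE[where A=A and v=w'])
        show "R\<^sup>*\<^sup>* w w'" using r by auto
        show "w' = w \<longrightarrow> cpls_at R (cPs R) w ?G (Dia (A))" using ne by simp
        show "w' \<noteq> w \<longrightarrow> cPs R w' ?G (Dia A)" using h by simp
        show "\<forall>w''. R w' w'' \<longrightarrow> cPs R w'' ?G A \<longrightarrow> cpls_at R (cPs R) w ?G (Dia A)"
          using r t by (metis cpls_at.diaI transpD)
      qed
    qed
  qed
qed



definition R0 :: "nat \<Rightarrow> nat \<Rightarrow> bool" where "R0 x y \<longleftrightarrow> x = 0 \<and> y = 1"

lemma cwf_R0: "cwf R0"
  unfolding cwf_def R0_def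
proof
  assume "\<exists>f::nat\<Rightarrow>nat. \<forall>n. f n = 0 \<and> f (Suc n) = 1"
  then obtain f :: "nat \<Rightarrow> nat" where "\<forall>n. f n = 0 \<and> f (Suc n) = 1" by blast
  then have "f 1 = 1" "f 1 = 0" by (metis One_nat_def)+
  then show False by simp
qed

lemma R0_1: "\<forall>w'. \<not> R0 1 w'" unfolding R0_def by simp
lemma R0_0: "R0 0 w' \<longleftrightarrow> w' = 1" unfolding R0_def by simp

lemma rt_dead: "\<forall>w'. \<not> R w w' \<Longrightarrow> R\<^sup>*\<^sup>* w v \<Longrightarrow> v = w"
  by (metis converse_rtranclpE)

lemma rt0: "R0\<^sup>*\<^sup>* 0 v \<Longrightarrow> v = 0 \<or> v = 1"
  by (metis R0_0 R0_1 converse_rtranclpE rt_dead)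

fun ev :: "('q \<Rightarrow> bool) \<Rightarrow> 'q fm \<Rightarrow> bool" where
  "ev V (Atom q) = V q"
| "ev V Bot = False"
| "ev V (Imp A B) = (ev V A \<longrightarrow> ev V B)"
| "ev V (Dia A) = False"
| "ev V (Box A) = True"

lemma dead_ctx:
  assumes d: "\<forall>w'. \<not> R w w'"
  shows "cpl_at R S w \<Gamma> A \<Longrightarrow> (\<forall>B. (B,w)\<in>\<Gamma> \<longrightarrow> (B,w)\<in>\<Gamma>') \<Longrightarrow> cpl_at R S w \<Gamma>' A"
proof (induction arbitrary: \<Gamma>' rule: cpl_at.induct)
  case (hyp A \<Gamma>) then show ?case by (metis cpl_at.hyp)
next
  case (botE \<Gamma> C) then show ?case by (metis cpl_at.botE)
next
  case (impI A \<Gamma> B)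
  have "\<forall>X. (X,w)\<in>insert (A,w) \<Gamma> \<longrightarrow> (X,w)\<in>insert (A,w) \<Gamma>'" using impI(3) by auto
  then show ?case using impI(2) by (metis cpl_at.impI)
next
  case (impE \<Gamma> A B) then show ?case by (metis cpl_at.impE)
next
  case (diaI w' \<Gamma> A) then show ?case using d by blast
next
  case (boxI \<Gamma> A) show ?case by (rule cpl_at.boxI) (use d in blast)
next
  case (diaE \<Gamma> A C)
  have "cpl_at R S w \<Gamma>' (Dia A)" using diaE by blast
  then show ?case by (rule cpl_at.diaE) (use d in blast)
next
  case (boxE \<Gamma> A C) then show ?case using d by blast
qed

lemma dead_ctx_s:
  assumes d: "\<forall>w'. \<not> R w w'"
  shows "cpls_at R S w \<Gamma> A \<Longrightarrow> (\<forall>B. (B,w)\<in>\<Gamma> \<longrightarrow> (B,w)\<in>\<Gamma>') \<Longrightarrow> cpls_at R S w \<Gamma>' A"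
proof (induction arbitrary: \<Gamma>' rule: cpls_at.induct)
  case (hyp A \<Gamma>) then show ?case by (metis cpls_at.hyp)
next
  case (botE v \<Gamma> C)
  have "v = w" using rt_dead[OF d botE(1)] .
  then have "cpls_at R S w \<Gamma>' Bot" using botE by blast
  then show ?case by (intro cpls_at.botE[where v=w]) auto
next
  case (impI A \<Gamma> B)
  have "\<forall>X. (X,w)\<in>insert (A,w) \<Gamma> \<longrightarrow> (X,w)\<in>insert (A,w) \<Gamma>'" using impI(3) by auto
  then show ?case using impI(2) by (metis cpls_at.impI)
next
  case (impE \<Gamma> A B) then show ?case by (metis cpls_at.impE)
next
  case (diaI w' \<Gamma> A) then show ?case using d by blast
next
  case (boxI \<Gamma> A) show ?case by (rule cpls_at.boxI) (use d in blast)
next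
  case (diaE v \<Gamma> A C)
  have "v = w" using rt_dead[OF d diaE(1)] .
  then have "cpls_at R S w \<Gamma>' (Dia A)" using diaE by blast
  then show ?case by (intro cpls_at.diaE[where v=w and A=A]) (use d in auto)
next
  case (boxE v \<Gamma> A C)
  have "v = w" using rt_dead[OF d boxE(1)] .
  then show ?case using boxE d by blast
qed

lemma dead_sound:
  assumes d: "\<forall>w'. \<not> R w w'"
  shows "cpl_at R S w \<Gamma> A \<Longrightarrow> (\<forall>B. (B,w)\<in>\<Gamma> \<longrightarrow> ev V B) \<Longrightarrow> ev V A"
proof (induction rule: cpl_at.induct)
  case (impI A \<Gamma> B) then show ?case by auto
next
  case (diaI w' \<Gamma> A) then show ?case using d by blast
next
  case (boxE \<Gamma> A C) then show ?case using d by blast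
qed auto

lemma dead_sound_s:
  assumes d: "\<forall>w'. \<not> R w w'"
  shows "cpls_at R S w \<Gamma> A \<Longrightarrow> (\<forall>B. (B,w)\<in>\<Gamma> \<longrightarrow> ev V B) \<Longrightarrow> ev V A"
proof (induction rule: cpls_at.induct)
  case (botE v \<Gamma> C)
  have "v = w" using rt_dead[OF d botE(1)] .
  then show ?case using botE by auto
next
  case (impI A \<Gamma> B) then show ?case by auto
next
  case (diaI w' \<Gamma> A) then show ?case using d by blast
next
  case (diaE v \<Gamma> A C)
  have "v = w" using rt_dead[OF d diaE(1)] .
  then show ?case using diaE by auto
next
  case (boxE v \<Gamma> A C)
  have "v = w" using rt_dead[OF d boxE(1)] .
  then show ?case using boxE d by blast
qed auto

fun T0 :: "(nat \<Rightarrow> ('q, nat) ctx \<Rightarrow> 'q fm \<Rightarrow> bool) \<Rightarrow> ('q, nat) ctx \<Rightarrow> 'q fm \<Rightarrow> bool" where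
  "T0 S G (Atom q) = False"
| "T0 S G Bot = False"
| "T0 S G (Imp A B) = (T0 S G A \<longrightarrow> T0 S G B)"
| "T0 S G (Dia A) = S 1 G A"
| "T0 S G (Box A) = S 1 G A"

definition Hinv :: "(nat \<Rightarrow> ('q, nat) ctx \<Rightarrow> 'q fm \<Rightarrow> bool) \<Rightarrow> bool" where
  "Hinv S \<longleftrightarrow> (\<forall>G G' A. (\<forall>B. (B,1)\<in>G \<longleftrightarrow> (B,1)\<in>G') \<longrightarrow> S 1 G A = S 1 G' A)"

lemma T0_ins: "Hinv S \<Longrightarrow> T0 S (insert (X,0) G) A = T0 S G A"
proof (induction A)
  case (Dia A)
  have "\<forall>B. (B,1::nat)\<in>insert (X,0) G \<longleftrightarrow> (B,1)\<in>G" by auto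
  then show ?case using Dia unfolding Hinv_def by simp
next
  case (Box A)
  have "\<forall>B. (B,1::nat)\<in>insert (X,0) G \<longleftrightarrow> (B,1)\<in>G" by auto
  then show ?case using Box unfolding Hinv_def by simp
qed auto

lemma sound0:
  assumes h: "Hinv S"
  shows "cpl_at R0 S 0 \<Gamma> A \<Longrightarrow> (\<forall>B. (B,0)\<in>\<Gamma> \<longrightarrow> T0 S \<Gamma> B) \<Longrightarrow> T0 S \<Gamma> A"
proof (induction rule: cpl_at.induct)
  case (hyp A \<Gamma>) then show ?case by blast
next
  case (botE \<Gamma> C) then show ?case by simp
next
  case (impI A \<Gamma> B)
  show ?case
  proof (simp, rule HOL.impI)
    assume a: "T0 S \<Gamma> A"
    have "\<forall>X. (X,0)\<in>insert (A,0) \<Gamma> \<longrightarrow> T0 S (insert (A,0) \<Gamma>) X"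
      using a impI(3) T0_ins[OF h] by auto
    then have "T0 S (insert (A,0) \<Gamma>) B" using impI(2) by blast
    then show "T0 S \<Gamma> B" using T0_ins[OF h] by simp
  qed
next
  case (impE \<Gamma> A B) then show ?case by simp
next
  case (diaI w' \<Gamma> A) then show ?case by (simp add: R0_0)
next
  case (boxI \<Gamma> A) then show ?case by (simp add: R0_0)
next
  case (diaE \<Gamma> A C)
  have "S 1 \<Gamma> A" using diaE by simp
  then show ?case using diaE(3,4) R0_0 by blast
next
  case (boxE \<Gamma> A C)
  have "S 1 \<Gamma> A" using boxE by simp
  then have "\<forall>w'. R0 0 w' \<longrightarrow> S w' \<Gamma> A" by (simp add: R0_0)
  then show ?case using boxE(3,4) by blast
qed

definition Dinv :: "(nat \<Rightarrow> ('q, nat) ctx \<Rightarrow> 'q fm \<Rightarrow> bool) \<Rightarrow> bool" where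
  "Dinv S \<longleftrightarrow> (\<forall>G. (\<forall>B. (B,1)\<notin>G) \<longrightarrow> \<not> S 1 G Bot \<and> (\<forall>A. \<not> S 1 G (Dia A)))"

lemma sound0s:
  assumes h: "Hinv S" and dd: "Dinv S"
  shows "cpls_at R0 S 0 \<Gamma> A \<Longrightarrow> (\<forall>B. (B,1)\<notin>\<Gamma>) \<Longrightarrow> (\<forall>B. (B,0)\<in>\<Gamma> \<longrightarrow> T0 S \<Gamma> B) \<Longrightarrow> T0 S \<Gamma> A"
proof (induction rule: cpls_at.induct)
  case (hyp A \<Gamma>) then show ?case by blast
next
  case (botE v \<Gamma> C)
  show ?case
  proof (cases "v = 0")
    case True then show ?thesis using botE by simp
  next
    case False then have "v = 1" using rt0 botE(1) by blast
    then show ?thesis using botE False dd unfolding Dinv_def by blast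
  qed
next
  case (impI A \<Gamma> B)
  show ?case
  proof (simp, rule HOL.impI)
    assume a: "T0 S \<Gamma> A"
    have "\<forall>X. (X,0)\<in>insert (A,0) \<Gamma> \<longrightarrow> T0 S (insert (A,0) \<Gamma>) X"
      using a impI(4) T0_ins[OF h] by auto
    moreover have "\<forall>X. (X,1)\<notin>insert (A,0) \<Gamma>" using impI(3) by simp
    ultimately have "T0 S (insert (A,0) \<Gamma>) B" using impI(2) by blast
    then show "T0 S \<Gamma> B" using T0_ins[OF h] by simp
  qed
next
  case (impE \<Gamma> A B) then show ?case by simp
next
  case (diaI w' \<Gamma> A) then show ?case by (simp add: R0_0)
next
  case (boxI \<Gamma> A) then show ?case by (simp add: R0_0)
next
  case (diaE v \<Gamma> A C)
  show ?case
  proof (cases "v = 0")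
    case True
    have "S 1 \<Gamma> A" using diaE True by simp
    then show ?thesis using diaE(4,5,6) True R0_0 by blast
  next
    case False then have "v = 1" using rt0 diaE(1) by blast
    then show ?thesis using diaE False dd unfolding Dinv_def by blast
  qed
next
  case (boxE v \<Gamma> A C)
  show ?case
  proof (cases "v = 0")
    case True
    have "S 1 \<Gamma> A" using boxE True by simp
    then have "\<forall>w'. R0 v w' \<longrightarrow> S w' \<Gamma> A" using True by (simp add: R0_0)
    then show ?thesis using boxE(4,5,6) by blast
  next
    case False then have "v = 1" using rt0 boxE(1) by blast
    then have "\<forall>w'. R0 v w' \<longrightarrow> S w' \<Gamma> A" using R0_1 by simp
    then show ?thesis using boxE(4,5,6) by blast
  qed
qed

lemma Hinv_cP: "Hinv (cP R0)"
  unfolding Hinv_def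
proof (intro allI HOL.impI)
  fix G G' :: "('q, nat) ctx" and A
  assume e: "\<forall>B. (B,1)\<in>G \<longleftrightarrow> (B,1)\<in>G'"
  have "cpl_at R0 (cP R0) 1 G A = cpl_at R0 (cP R0) 1 G' A"
  proof
    assume "cpl_at R0 (cP R0) 1 G A"
    then show "cpl_at R0 (cP R0) 1 G' A" by (rule dead_ctx[where R=R0 and w=1, OF R0_1]) (use e in blast)
  next
    assume "cpl_at R0 (cP R0) 1 G' A"
    then show "cpl_at R0 (cP R0) 1 G A" by (rule dead_ctx[where R=R0 and w=1, OF R0_1]) (use e in blast)
  qed
  then show "cP R0 1 G A = cP R0 1 G' A" by (simp only: cP_fix[OF cwf_R0])
qed

lemma Hinv_cPs: "Hinv (cPs R0)"
  unfolding Hinv_def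
proof (intro allI HOL.impI)
  fix G G' :: "('q, nat) ctx" and A
  assume e: "\<forall>B. (B,1)\<in>G \<longleftrightarrow> (B,1)\<in>G'"
  have "cpls_at R0 (cPs R0) 1 G A = cpls_at R0 (cPs R0) 1 G' A"
  proof
    assume "cpls_at R0 (cPs R0) 1 G A"
    then show "cpls_at R0 (cPs R0) 1 G' A" by (rule dead_ctx_s[where R=R0 and w=1, OF R0_1]) (use e in blast)
  next
    assume "cpls_at R0 (cPs R0) 1 G' A"
    then show "cpls_at R0 (cPs R0) 1 G A" by (rule dead_ctx_s[where R=R0 and w=1, OF R0_1]) (use e in blast)
  qed
  then show "cPs R0 1 G A = cPs R0 1 G' A" by (simp only: cPs_fix[OF cwf_R0])
qed

lemma Dinv_cPs: "Dinv (cPs R0)"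
  unfolding Dinv_def
proof (intro allI HOL.impI conjI)
  fix G :: "('q, nat) ctx" and A
  assume e: "\<forall>B. (B,1)\<notin>G"
  show "\<not> cPs R0 1 G Bot"
    using dead_sound_s[where R=R0 and w=1, OF R0_1, of "cPs R0" G Bot "\<lambda>_. False"] e cPs_fix[OF cwf_R0] by auto
  show "\<not> cPs R0 1 G (Dia A)"
    using dead_sound_s[where R=R0 and w=1, OF R0_1, of "cPs R0" G "Dia A" "\<lambda>_. False"] e cPs_fix[OF cwf_R0] by auto
qed

lemma neg1: "\<not> CPL R0 ({(Bot, 1)} :: ('q, nat) ctx) (Neg (Dia Bot)) 0"
proof
  let ?G = "{(Bot, 1::nat)} :: ('q, nat) ctx"
  assume "CPL R0 ?G (Neg (Dia Bot)) 0"
  then have "cpl_at R0 (cP R0) 0 ?G (Imp (Dia Bot) Bot)"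
    using cP_fix[OF cwf_R0] unfolding cP_def Neg_def by metis
  then have "T0 (cP R0) ?G (Imp (Dia Bot) Bot)"
    by (rule sound0[OF Hinv_cP]) simp
  moreover have "cP R0 1 ?G Bot"
    using cP_fix[OF cwf_R0] cpl_at.hyp[of Bot 1 ?G R0 "cP R0"] by auto
  ultimately show False by simp
qed

lemma neg2: fixes a :: 'q shows "\<not> CPL R0 {} (Imp (Imp (Dia (Atom a)) (Box Bot)) (Box (Imp (Atom a) Bot))) 0"
proof
  let ?G = "{} :: ('q, nat) ctx"
  assume "CPL R0 ?G (Imp (Imp (Dia (Atom a)) (Box Bot)) (Box (Imp (Atom a) Bot))) 0"
  then have "cpl_at R0 (cP R0) 0 ?G (Imp (Imp (Dia (Atom a)) (Box Bot)) (Box (Imp (Atom a) Bot)))"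
    using cP_fix[OF cwf_R0] unfolding cP_def by metis
  then have t: "T0 (cP R0) ?G (Imp (Imp (Dia (Atom a)) (Box Bot)) (Box (Imp (Atom a) Bot)))"
    by (rule sound0[OF Hinv_cP]) simp
  have n1: "\<not> cP R0 1 ?G (Atom a)"
    using dead_sound[where R=R0 and w=1, OF R0_1, of "cP R0" ?G "Atom a" "\<lambda>_. False"] cP_fix[OF cwf_R0] by auto
  have n2: "\<not> cP R0 1 ?G (Imp (Atom a) Bot)"
    using dead_sound[where R=R0 and w=1, OF R0_1, of "cP R0" ?G "Imp (Atom a) Bot" "\<lambda>_. True"] cP_fix[OF cwf_R0] by auto
  have "(cP R0 1 ?G (Atom a) \<longrightarrow> cP R0 1 ?G Bot) \<longrightarrow> cP R0 1 ?G (Imp (Atom a) Bot)"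
    using t by simp
  then show False using n1 n2 by simp
qed

lemma neg3: fixes a :: 'q shows "\<not> CPLs R0 {} (Imp (Imp (Dia (Atom a)) (Box Bot)) (Box (Imp (Atom a) Bot))) 0"
proof
  let ?G = "{} :: ('q, nat) ctx"
  assume "CPLs R0 ?G (Imp (Imp (Dia (Atom a)) (Box Bot)) (Box (Imp (Atom a) Bot))) 0"
  then have "cpls_at R0 (cPs R0) 0 ?G (Imp (Imp (Dia (Atom a)) (Box Bot)) (Box (Imp (Atom a) Bot)))"
    using cPs_fix[OF cwf_R0] unfolding cPs_def by metis
  then have t: "T0 (cPs R0) ?G (Imp (Imp (Dia (Atom a)) (Box Bot)) (Box (Imp (Atom a) Bot)))"
    by (rule sound0s[OF Hinv_cPs Dinv_cPs]) simp_all
  have n1: "\<not> cPs R0 1 ?G (Atom a)"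
    using dead_sound_s[where R=R0 and w=1, OF R0_1, of "cPs R0" ?G "Atom a" "\<lambda>_. False"] cPs_fix[OF cwf_R0] by auto
  have n2: "\<not> cPs R0 1 ?G (Imp (Atom a) Bot)"
    using dead_sound_s[where R=R0 and w=1, OF R0_1, of "cPs R0" ?G "Imp (Atom a) Bot" "\<lambda>_. True"] cPs_fix[OF cwf_R0] by auto
  have "(cPs R0 1 ?G (Atom a) \<longrightarrow> cPs R0 1 ?G Bot) \<longrightarrow> cPs R0 1 ?G (Imp (Atom a) Bot)"
    using t by simp
  then show False using n1 n2 by simp
qed


lemma MP1: "valid_CPL K (Imp A B) \<Longrightarrow> valid_CPL K A \<Longrightarrow> valid_CPL K B"
  unfolding valid_CPL_def using CPL_unfold cpl_at.impE by metis
lemma MP2: "valid_CPLs K (Imp A B) \<Longrightarrow> valid_CPLs K A \<Longrightarrow> valid_CPLs K B"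
  unfolding valid_CPLs_def using CPLs_unfold cpls_at.impE by metis
lemma NEC1: fixes K :: "('w \<Rightarrow> 'w \<Rightarrow> bool) \<Rightarrow> bool" and A :: "'q fm" shows "valid_CPL K A \<Longrightarrow> valid_CPL K (Box A)"
proof (rule vCPL)
  fix R :: "'w \<Rightarrow> 'w \<Rightarrow> bool" and w and \<Gamma> :: "('q, 'w) ctx" assume v: "valid_CPL K A" and "cwf R" "K R" "finite \<Gamma>"
  then show "cpl_at R (cP R) w \<Gamma> (Box A)"
    by (intro cpl_at.boxI allI HOL.impI) (simp add: valid_CPL_def cP_def)
qed
lemma NEC2: fixes K :: "('w \<Rightarrow> 'w \<Rightarrow> bool) \<Rightarrow> bool" and A :: "'q fm" shows "valid_CPLs K A \<Longrightarrow> valid_CPLs K (Box A)"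
proof (rule vCPLs)
  fix R :: "'w \<Rightarrow> 'w \<Rightarrow> bool" and w and \<Gamma> :: "('q, 'w) ctx" assume v: "valid_CPLs K A" and "cwf R" "K R" "finite \<Gamma>"
  then show "cpls_at R (cPs R) w \<Gamma> (Box A)"
    by (intro cpls_at.boxI allI HOL.impI) (simp add: valid_CPLs_def cPs_def)
qed

theorem theorem6:
  fixes A B C :: "'q fm"
  shows
  \<comment> \<open>(MP)\<close>
  "(valid_CPL (all_frames :: ('w \<Rightarrow> 'w \<Rightarrow> bool) \<Rightarrow> bool) (Imp A B) \<and>
      valid_CPL (all_frames :: ('w \<Rightarrow> 'w \<Rightarrow> bool) \<Rightarrow> bool) A
      \<longrightarrow> valid_CPL (all_frames :: ('w \<Rightarrow> 'w \<Rightarrow> bool) \<Rightarrow> bool) B) \<and>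
   (valid_CPLs (all_frames :: ('w \<Rightarrow> 'w \<Rightarrow> bool) \<Rightarrow> bool) (Imp A B) \<and>
      valid_CPLs (all_frames :: ('w \<Rightarrow> 'w \<Rightarrow> bool) \<Rightarrow> bool) A
      \<longrightarrow> valid_CPLs (all_frames :: ('w \<Rightarrow> 'w \<Rightarrow> bool) \<Rightarrow> bool) B) \<and>
   \<comment> \<open>(I), (K), (S), (bot E)\<close>
   valid_CPL (all_frames :: ('w \<Rightarrow> 'w \<Rightarrow> bool) \<Rightarrow> bool) (Imp A A) \<and>
   valid_CPLs (all_frames :: ('w \<Rightarrow> 'w \<Rightarrow> bool) \<Rightarrow> bool) (Imp A A) \<and>
   valid_CPL (all_frames :: ('w \<Rightarrow> 'w \<Rightarrow> bool) \<Rightarrow> bool) (Imp A (Imp B A)) \<and>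
   valid_CPLs (all_frames :: ('w \<Rightarrow> 'w \<Rightarrow> bool) \<Rightarrow> bool) (Imp A (Imp B A)) \<and>
   valid_CPL (all_frames :: ('w \<Rightarrow> 'w \<Rightarrow> bool) \<Rightarrow> bool)
     (Imp (Imp A (Imp B C)) (Imp (Imp A B) (Imp A C))) \<and>
   valid_CPLs (all_frames :: ('w \<Rightarrow> 'w \<Rightarrow> bool) \<Rightarrow> bool)
     (Imp (Imp A (Imp B C)) (Imp (Imp A B) (Imp A C))) \<and>
   valid_CPL (all_frames :: ('w \<Rightarrow> 'w \<Rightarrow> bool) \<Rightarrow> bool) (Imp Bot A) \<and>
   valid_CPLs (all_frames :: ('w \<Rightarrow> 'w \<Rightarrow> bool) \<Rightarrow> bool) (Imp Bot A) \<and>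
   \<comment> \<open>(NEC)\<close>
   (valid_CPL (all_frames :: ('w \<Rightarrow> 'w \<Rightarrow> bool) \<Rightarrow> bool) A
      \<longrightarrow> valid_CPL (all_frames :: ('w \<Rightarrow> 'w \<Rightarrow> bool) \<Rightarrow> bool) (Box A)) \<and>
   (valid_CPLs (all_frames :: ('w \<Rightarrow> 'w \<Rightarrow> bool) \<Rightarrow> bool) A
      \<longrightarrow> valid_CPLs (all_frames :: ('w \<Rightarrow> 'w \<Rightarrow> bool) \<Rightarrow> bool) (Box A)) \<and>
   \<comment> \<open>(K box), (K dia)\<close>
   valid_CPL (all_frames :: ('w \<Rightarrow> 'w \<Rightarrow> bool) \<Rightarrow> bool)
     (Imp (Box (Imp A B)) (Imp (Box A) (Box B))) \<and>
   valid_CPLs (all_frames :: ('w \<Rightarrow> 'w \<Rightarrow> bool) \<Rightarrow> bool)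
     (Imp (Box (Imp A B)) (Imp (Box A) (Box B))) \<and>
   valid_CPL (all_frames :: ('w \<Rightarrow> 'w \<Rightarrow> bool) \<Rightarrow> bool)
     (Imp (Box (Imp A B)) (Imp (Dia A) (Dia B))) \<and>
   valid_CPLs (all_frames :: ('w \<Rightarrow> 'w \<Rightarrow> bool) \<Rightarrow> bool)
     (Imp (Box (Imp A B)) (Imp (Dia A) (Dia B))) \<and>
   \<comment> \<open>(4 box) over transitive frames\<close>
   valid_CPL (transp :: ('w \<Rightarrow> 'w \<Rightarrow> bool) \<Rightarrow> bool) (Imp (Box A) (Box (Box A))) \<and>
   valid_CPLs (transp :: ('w \<Rightarrow> 'w \<Rightarrow> bool) \<Rightarrow> bool) (Imp (Box A) (Box (Box A))) \<and>
   \<comment> \<open>(dia bot) in CPL*\<close>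
   valid_CPLs (all_frames :: ('w \<Rightarrow> 'w \<Rightarrow> bool) \<Rightarrow> bool) (Neg (Dia Bot)) \<and>
   \<comment> \<open>(4 dia) in CPL* over transitive frames\<close>
   valid_CPLs (transp :: ('w \<Rightarrow> 'w \<Rightarrow> bool) \<Rightarrow> bool) (Imp (Dia (Dia A)) (Dia A)) \<and>
   \<comment> \<open>not dia bot is not an axiom of CPL\<close>
   (\<exists>(R :: nat \<Rightarrow> nat \<Rightarrow> bool) w (\<Gamma> :: ('q, nat) ctx).
      cwf R \<and> finite \<Gamma> \<and> \<not> CPL R \<Gamma> (Neg (Dia Bot)) w) \<and>
   \<comment> \<open>(dia A implies box B) implies box (A implies B) is an axiom of neither\<close>
   (\<exists>(R :: nat \<Rightarrow> nat \<Rightarrow> bool) w (\<Gamma> :: ('q, nat) ctx) (A' :: 'q fm) B'.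
      cwf R \<and> finite \<Gamma> \<and> \<not> CPL R \<Gamma> (Imp (Imp (Dia A') (Box B')) (Box (Imp A' B'))) w) \<and>
   (\<exists>(R :: nat \<Rightarrow> nat \<Rightarrow> bool) w (\<Gamma> :: ('q, nat) ctx) (A' :: 'q fm) B'.
      cwf R \<and> finite \<Gamma> \<and> \<not> CPLs R \<Gamma> (Imp (Imp (Dia A') (Box B')) (Box (Imp A' B'))) w)"
proof -
  let ?K = "all_frames :: ('w \<Rightarrow> 'w \<Rightarrow> bool) \<Rightarrow> bool"
  let ?T = "transp :: ('w \<Rightarrow> 'w \<Rightarrow> bool) \<Rightarrow> bool"
  have n1: "\<exists>(R :: nat \<Rightarrow> nat \<Rightarrow> bool) w (\<Gamma> :: ('q, nat) ctx).
      cwf R \<and> finite \<Gamma> \<and> \<not> CPL R \<Gamma> (Neg (Dia Bot)) w"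
    by (rule exI[of _ R0], rule exI[of _ 0], rule exI[of _ "{(Bot,1)}"]) (intro conjI, rule cwf_R0, simp, rule neg1)
  have n2: "\<exists>(R :: nat \<Rightarrow> nat \<Rightarrow> bool) w (\<Gamma> :: ('q, nat) ctx) (A' :: 'q fm) B'.
      cwf R \<and> finite \<Gamma> \<and> \<not> CPL R \<Gamma> (Imp (Imp (Dia A') (Box B')) (Box (Imp A' B'))) w"
    by (rule exI[of _ R0], rule exI[of _ 0], rule exI[of _ "{}"], rule exI[of _ "Atom undefined"], rule exI[of _ Bot]) (simp add: cwf_R0 neg2)
  have n3: "\<exists>(R :: nat \<Rightarrow> nat \<Rightarrow> bool) w (\<Gamma> :: ('q, nat) ctx) (A' :: 'q fm) B'.
      cwf R \<and> finite \<Gamma> \<and> \<not> CPLs R \<Gamma> (Imp (Imp (Dia A') (Box B')) (Box (Imp A' B'))) w"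
    by (rule exI[of _ R0], rule exI[of _ 0], rule exI[of _ "{}"], rule exI[of _ "Atom undefined"], rule exI[of _ Bot]) (simp add: cwf_R0 neg3)
  show ?thesis
    apply (intro conjI)
    apply (rule HOL.impI, erule conjE, erule (1) MP1)
    apply (rule HOL.impI, erule conjE, erule (1) MP2)
    apply (rule vCPL, rule I1)
    apply (rule vCPLs, rule I2)
    apply (rule vCPL, rule K1)
    apply (rule vCPLs, rule K2)
    apply (rule vCPL, rule S1)
    apply (rule vCPLs, rule S2)
    apply (rule vCPL, rule B1)
    apply (rule vCPLs, rule B2)
    apply (rule HOL.impI, erule NEC1)
    apply (rule HOL.impI, erule NEC2)
    apply (rule vCPL, erule Kbox1)
    apply (rule vCPLs, erule Kbox2)
    apply (rule vCPL, erule Kdia1)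
    apply (rule vCPLs, erule Kdia2)
    apply (rule vCPL, erule Four1, assumption)
    apply (rule vCPLs, erule Four2, assumption)
    apply (rule vCPLs, erule DiaBot)
    apply (rule vCPLs, erule FourDia, assumption)
    apply (rule n1)
    apply (rule n2)
    apply (rule n3)
    done
qed

end
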